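(* A vertex of a monotonous quiver is phylogenetic if and only if it is normal and has finite height.
   Context: A quiver consists of a class of vertices and, for each ordered pair of vertices $(A,B)$, a set of edges $A\to B$ (loops and multiple edges allowed). An evolution of length $m\ge 0$ is a sequence $A_0\leftarrow A_1\leftarrow\cdots\leftarrow A_m$ of vertices together with edges $A_k\to A_{k-1}$ ($1\le k\le m$); $A_0$ is its initial and $A_m$ its terminal vertex. Write $A\le B$ ($A$ is an ancestor of $B$) if there is an evolution with initial vertex $A$ and terminal vertex $B$; $A,B$ are isotypic ($A\sim B$) if $A\le B$ and $B\le A$. A vertex $A$ is primitive if every ancestor of $A$ is isotypic to $A$. A full evolution for $X$ is an evolution with primitive initial vertex and terminal vertex $X$. The height $h(X)$ is the smallest length of a full evolution for $X$ ($\infty$ if none). A vertex $A_k$ ($0\le k<m$) of an evolution $A_0\leftarrow\cdots\leftarrow A_m$ is critical if $h(A_k)<\infty$ and $h(A_{k+1})=h(A_k)+1$. The critical ancestors of a vertex $B$ are the critical vertices of full evolutions terminating at $B$. $B$ is normal if any two critical ancestors of $B$ of equal height are isotypic. An evolution $\alpha=(A_0\leftarrow\cdots\leftarrow A_m)$ embeds in $\beta=(B_0\leftarrow\cdots\leftarrow B_n)$ if $m\le n$ and there are $0\le r_0<\cdots<r_m\le n$ with $A_k\sim B_{r_k}$. A universal evolution for $X$ is a full evolution for $X$ embedding in every full evolution for $X$; $X$ is phylogenetic if one exists. A quiver is monotonous if $h(A)\ge h(B)$ for every edge $A\to B$. *)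

theory Defs
  imports Main "HOL-Library.Extended_Nat"
begin

text \<open>A quiver: vertices of type 'v, and for each ordered pair (A,B) a set
  E A B :: 'e set of edges A \<rightarrow> B.\<close>

definition evolution :: "('v \<Rightarrow> 'v \<Rightarrow> 'e set) \<Rightarrow> 'v list \<Rightarrow> 'e list \<Rightarrow> bool" where
  "evolution E vs es \<longleftrightarrow> vs \<noteq> [] \<and> length es + 1 = length vs \<and>
     (\<forall>k. 1 \<le> k \<and> k < length vs \<longrightarrow> es ! (k - 1) \<in> E (vs ! k) (vs ! (k - 1)))"

definition evo_len :: "'v list \<Rightarrow> nat" where
  "evo_len vs = length vs - 1"

definition ancestor :: "('v \<Rightarrow> 'v \<Rightarrow> 'e set) \<Rightarrow> 'v \<Rightarrow> 'v \<Rightarrow> bool" where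
  "ancestor E A B \<longleftrightarrow> (\<exists>vs es. evolution E vs es \<and> hd vs = A \<and> last vs = B)"

definition isotypic :: "('v \<Rightarrow> 'v \<Rightarrow> 'e set) \<Rightarrow> 'v \<Rightarrow> 'v \<Rightarrow> bool" where
  "isotypic E A B \<longleftrightarrow> ancestor E A B \<and> ancestor E B A"

definition primitive :: "('v \<Rightarrow> 'v \<Rightarrow> 'e set) \<Rightarrow> 'v \<Rightarrow> bool" where
  "primitive E A \<longleftrightarrow> (\<forall>B. ancestor E B A \<longrightarrow> isotypic E B A)"

definition full_evolution :: "('v \<Rightarrow> 'v \<Rightarrow> 'e set) \<Rightarrow> 'v \<Rightarrow> 'v list \<Rightarrow> 'e list \<Rightarrow> bool" where
  "full_evolution E X vs es \<longleftrightarrow> evolution E vs es \<and> primitive E (hd vs) \<and> last vs = X"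

definition height :: "('v \<Rightarrow> 'v \<Rightarrow> 'e set) \<Rightarrow> 'v \<Rightarrow> enat" where
  "height E X = (INF vs \<in> {vs. \<exists>es. full_evolution E X vs es}. enat (evo_len vs))"

definition critical :: "('v \<Rightarrow> 'v \<Rightarrow> 'e set) \<Rightarrow> 'v list \<Rightarrow> nat \<Rightarrow> bool" where
  "critical E vs k \<longleftrightarrow> k < evo_len vs \<and> height E (vs ! k) < \<infinity> \<and>
     height E (vs ! (k + 1)) = height E (vs ! k) + 1"

definition critical_ancestors :: "('v \<Rightarrow> 'v \<Rightarrow> 'e set) \<Rightarrow> 'v \<Rightarrow> 'v set" where
  "critical_ancestors E B =
     {vs ! k | vs es k. full_evolution E B vs es \<and> critical E vs k}"

definition normal :: "('v \<Rightarrow> 'v \<Rightarrow> 'e set) \<Rightarrow> 'v \<Rightarrow> bool" where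
  "normal E B \<longleftrightarrow> (\<forall>C \<in> critical_ancestors E B. \<forall>D \<in> critical_ancestors E B.
      height E C = height E D \<longrightarrow> isotypic E C D)"

definition embeds :: "('v \<Rightarrow> 'v \<Rightarrow> 'e set) \<Rightarrow> 'v list \<Rightarrow> 'v list \<Rightarrow> bool" where
  "embeds E as bs \<longleftrightarrow> evo_len as \<le> evo_len bs \<and>
     (\<exists>r :: nat \<Rightarrow> nat. (\<forall>i j. i < j \<and> j \<le> evo_len as \<longrightarrow> r i < r j) \<and>
        (\<forall>k \<le> evo_len as. r k \<le> evo_len bs \<and> isotypic E (as ! k) (bs ! (r k))))"

definition universal_evolution :: "('v \<Rightarrow> 'v \<Rightarrow> 'e set) \<Rightarrow> 'v \<Rightarrow> 'v list \<Rightarrow> 'e list \<Rightarrow> bool" where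
  "universal_evolution E X vs es \<longleftrightarrow> full_evolution E X vs es \<and>
     (\<forall>ws fs. full_evolution E X ws fs \<longrightarrow> embeds E vs ws)"

definition phylogenetic :: "('v \<Rightarrow> 'v \<Rightarrow> 'e set) \<Rightarrow> 'v \<Rightarrow> bool" where
  "phylogenetic E X \<longleftrightarrow> (\<exists>vs es. universal_evolution E X vs es)"

definition monotonous :: "('v \<Rightarrow> 'v \<Rightarrow> 'e set) \<Rightarrow> bool" where
  "monotonous E \<longleftrightarrow> (\<forall>A B. E A B \<noteq> {} \<longrightarrow> height E A \<ge> height E B)"

end

theory Submission
  imports Defs
begin

definition chain :: "('v \<Rightarrow> 'v \<Rightarrow> 'e set) \<Rightarrow> 'v list \<Rightarrow> bool" where
  "chain E vs \<longleftrightarrow> vs \<noteq> [] \<and> (\<forall>k. Suc k < length vs \<longrightarrow> E (vs ! Suc k) (vs ! k) \<noteq> {})"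

definition FE :: "('v \<Rightarrow> 'v \<Rightarrow> 'e set) \<Rightarrow> 'v \<Rightarrow> 'v list \<Rightarrow> bool" where
  "FE E X vs \<longleftrightarrow> chain E vs \<and> primitive E (hd vs) \<and> last vs = X"

lemma chain_evolution: "chain E vs \<longleftrightarrow> (\<exists>es. evolution E vs es)"
proof
  assume c: "chain E vs"
  define es where "es = map (\<lambda>k. SOME e. e \<in> E (vs ! Suc k) (vs ! k)) [0..<length vs - 1]"
  have "evolution E vs es"
    unfolding evolution_def
  proof (intro conjI allI impI)
    show "vs \<noteq> []" using c chain_def by blast
    then show "length es + 1 = length vs" unfolding es_def by simp
  next
    fix k assume k: "1 \<le> k \<and> k < length vs"
    then obtain i where i: "k = Suc i" by (cases k) auto
    have ne: "E (vs ! Suc i) (vs ! i) \<noteq> {}" using c k i chain_def by blast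
    have "es ! (k - 1) = (SOME e. e \<in> E (vs ! Suc i) (vs ! i))"
      unfolding es_def using k i by simp
    then show "es ! (k - 1) \<in> E (vs ! k) (vs ! (k - 1))"
      using ne i by (simp add: some_in_eq)
  qed
  then show "\<exists>es. evolution E vs es" by blast
next
  assume "\<exists>es. evolution E vs es"
  then obtain es where e: "evolution E vs es" by blast
  show "chain E vs" unfolding chain_def
  proof (intro conjI allI impI)
    show "vs \<noteq> []" using e evolution_def by blast
  next
    fix k assume "Suc k < length vs"
    then have "es ! (Suc k - 1) \<in> E (vs ! Suc k) (vs ! (Suc k - 1))"
      using e unfolding evolution_def by (metis le_add1 plus_1_eq_Suc)
    then show "E (vs ! Suc k) (vs ! k) \<noteq> {}" by auto
  qed
qed

lemma FE_iff: "(\<exists>es. full_evolution E X vs es) \<longleftrightarrow> FE E X vs"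
  unfolding full_evolution_def FE_def chain_evolution by blast

lemma height_FE: "height E X = (INF vs \<in> {vs. FE E X vs}. enat (length vs - 1))"
  unfolding height_def evo_len_def FE_iff by simp

lemma ancestor_chain: "ancestor E A B \<longleftrightarrow> (\<exists>vs. chain E vs \<and> hd vs = A \<and> last vs = B)"
  unfolding ancestor_def chain_evolution by blast

lemma chain_single: "chain E [a]" unfolding chain_def by simp

lemma chain_ne: "chain E vs \<Longrightarrow> vs \<noteq> []" unfolding chain_def by simp

lemma chain_step: "chain E vs \<Longrightarrow> Suc k < length vs \<Longrightarrow> E (vs ! Suc k) (vs ! k) \<noteq> {}"
  unfolding chain_def by simp

lemma chain_append:
  assumes "chain E xs" "chain E ys" "E (hd ys) (last xs) \<noteq> {}"
  shows "chain E (xs @ ys)"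
  unfolding chain_def
proof (intro conjI allI impI)
  show "xs @ ys \<noteq> []" using assms(1) chain_ne by auto
next
  fix k assume k: "Suc k < length (xs @ ys)"
  have xne: "xs \<noteq> []" and yne: "ys \<noteq> []" using assms chain_ne by auto
  consider "Suc k < length xs" | "Suc k = length xs" | "Suc k > length xs" by linarith
  then show "E ((xs @ ys) ! Suc k) ((xs @ ys) ! k) \<noteq> {}"
  proof cases
    case 1 then show ?thesis using assms(1) chain_step by (simp add: nth_append)
  next
    case 2
    then have "(xs @ ys) ! Suc k = hd ys" using yne by (simp add: nth_append hd_conv_nth)
    moreover have "(xs @ ys) ! k = last xs"
    proof -
      have "k = length xs - 1" using 2 by simp
      then show ?thesis using 2 xne by (simp add: nth_append last_conv_nth)
    qed
    ultimately show ?thesis using assms(3) by simp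
  next
    case 3
    then obtain i where i: "k = length xs + i" by (metis less_Suc_eq_le le_Suc_ex)
    have "Suc i < length ys" using k i by simp
    then show ?thesis using assms(2) chain_step i by (simp add: nth_append)
  qed
qed

lemma chain_drop: "chain E vs \<Longrightarrow> n < length vs \<Longrightarrow> chain E (drop n vs)"
  unfolding chain_def by auto

lemma chain_take: "chain E vs \<Longrightarrow> 0 < n \<Longrightarrow> chain E (take n vs)"
  unfolding chain_def by auto

lemma ancestor_nth:
  assumes "chain E vs" "i \<le> j" "j < length vs"
  shows "ancestor E (vs ! i) (vs ! j)"
proof -
  let ?ws = "take (Suc (j - i)) (drop i vs)"
  have "chain E ?ws" using assms chain_drop chain_take by (metis le_less_trans zero_less_Suc)
  moreover have "hd ?ws = vs ! i" using assms by (simp add: hd_conv_nth)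
  moreover have "last ?ws = vs ! j"
  proof -
    have l: "length ?ws = Suc (j - i)" using assms by simp
    then have "last ?ws = ?ws ! (j - i)" by (metis last_conv_nth diff_Suc_1 list.size(3) nat.distinct(1))
    also have "\<dots> = vs ! j" using assms by simp
    finally show ?thesis .
  qed
  ultimately show ?thesis unfolding ancestor_chain by blast
qed

lemma ancestor_refl: "ancestor E A A"
  unfolding ancestor_chain using chain_single by fastforce

lemma ancestor_trans:
  assumes "ancestor E A B" "ancestor E B C" shows "ancestor E A C"
proof -
  obtain xs where x: "chain E xs" "hd xs = A" "last xs = B" using assms(1) ancestor_chain by metis
  obtain ys where y: "chain E ys" "hd ys = B" "last ys = C" using assms(2) ancestor_chain by metis
  have xne: "xs \<noteq> []" and yne: "ys \<noteq> []" using x y chain_ne by auto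
  show ?thesis
  proof (cases "tl ys = []")
    case True
    then have "C = B" using y yne by (metis last_ConsL list.collapse)
    then show ?thesis using assms(1) by simp
  next
    case False
    then have l: "1 < length ys" using yne by (cases ys) auto
    have "chain E (tl ys)" using chain_drop[OF y(1), of 1] l by (simp add: drop_Suc)
    moreover have "E (hd (tl ys)) (last xs) \<noteq> {}"
      using chain_step[OF y(1), of 0] l y(2) yne False by (simp add: hd_conv_nth nth_tl x(3))
    ultimately have "chain E (xs @ tl ys)" using chain_append x(1) by blast
    moreover have "hd (xs @ tl ys) = A" using xne x by simp
    moreover have "last (xs @ tl ys) = C" using False y by (simp add: last_tl)
    ultimately show ?thesis unfolding ancestor_chain by blast
  qed
qed

lemma iso_refl: "isotypic E A A" unfolding isotypic_def by (simp add: ancestor_refl)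
lemma iso_sym: "isotypic E A B \<Longrightarrow> isotypic E B A" unfolding isotypic_def by blast
lemma iso_trans2: "isotypic E A B \<Longrightarrow> isotypic E B C \<Longrightarrow> isotypic E A C"
  unfolding isotypic_def using ancestor_trans[of E A B C] ancestor_trans[of E C B A] by simp

lemma FE_ne: "FE E X vs \<Longrightarrow> vs \<noteq> []" by (simp add: FE_def chain_def)

lemma height_le: "FE E X vs \<Longrightarrow> height E X \<le> enat (length vs - 1)"
  unfolding height_FE by (rule INF_lower) simp

lemma height_fin:
  assumes "height E X < \<infinity>"
  obtains vs where "FE E X vs" "height E X = enat (length vs - 1)"
proof -
  let ?S = "(\<lambda>vs. enat (length vs - 1)) ` {vs. FE E X vs}"
  have h: "height E X = Inf ?S" unfolding height_FE by simp
  have "?S \<noteq> {}"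
  proof
    assume "?S = {}"
    then have "height E X = \<infinity>" using h by (simp add: top_enat_def)
    then show False using assms by simp
  qed
  then obtain x where "x \<in> ?S" by blast
  then have "(LEAST y. y \<in> ?S) \<in> ?S" by (rule LeastI)
  then have "Inf ?S \<in> ?S" using \<open>?S \<noteq> {}\<close> unfolding Inf_enat_def by simp
  then obtain vs where "FE E X vs" "Inf ?S = enat (length vs - 1)" by blast
  then show ?thesis using that h by simp
qed

lemma height_primitive: "primitive E A \<Longrightarrow> height E A = 0"
proof -
  assume "primitive E A"
  then have "FE E A [A]" unfolding FE_def using chain_single by simp
  then have "height E A \<le> 0" using height_le[of E A "[A]"] by (simp add: zero_enat_def)
  then show ?thesis by simp
qed

lemma FE_prefix: "FE E X vs \<Longrightarrow> k < length vs \<Longrightarrow> FE E (vs ! k) (take (Suc k) vs)"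
proof -
  assume a: "FE E X vs" "k < length vs"
  have "last (take (Suc k) vs) = vs ! k" using a by (simp add: take_Suc_conv_app_nth)
  moreover have "hd (take (Suc k) vs) = hd vs" by (simp add: hd_take)
  ultimately show ?thesis using a chain_take[of E vs "Suc k"] unfolding FE_def by simp
qed

lemma height_prefix: "FE E X vs \<Longrightarrow> k < length vs \<Longrightarrow> height E (vs ! k) \<le> enat k"
proof -
  assume a: "FE E X vs" "k < length vs"
  have l: "length (take (Suc k) vs) - 1 = k" using a by simp
  show ?thesis using height_le[OF FE_prefix[OF a]] unfolding l .
qed

lemma splice:
  assumes "FE E (vs ! k) ws" "chain E vs" "Suc k < length vs"
  shows "FE E (last vs) (ws @ drop (Suc k) vs)"
proof -
  have wc: "chain E ws" and wp: "primitive E (hd ws)" and wl: "last ws = vs ! k"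
    using assms(1) unfolding FE_def by auto
  have wne: "ws \<noteq> []" using wc chain_ne by blast
  have dc: "chain E (drop (Suc k) vs)" using chain_drop[OF assms(2,3)] .
  have "hd (drop (Suc k) vs) = vs ! Suc k" using assms(3) by (simp add: hd_drop_conv_nth)
  then have e: "E (hd (drop (Suc k) vs)) (last ws) \<noteq> {}" using chain_step[OF assms(2,3)] wl by simp
  have c: "chain E (ws @ drop (Suc k) vs)" using chain_append[OF wc dc e] .
  have "hd (ws @ drop (Suc k) vs) = hd ws" using wne by simp
  moreover have "last (ws @ drop (Suc k) vs) = last vs" using assms(3) by simp
  ultimately show ?thesis using c wp unfolding FE_def by simp
qed

lemma height_step:
  assumes "chain E vs" "Suc k < length vs"
  shows "height E (vs ! Suc k) \<le> height E (vs ! k) + 1"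
proof (cases "height E (vs ! k) < \<infinity>")
  case False then show ?thesis by simp
next
  case True
  then obtain ws where w: "FE E (vs ! k) ws" "height E (vs ! k) = enat (length ws - 1)"
    using height_fin[OF True] by blast
  let ?vs = "[vs ! k, vs ! Suc k]"
  have "chain E ?vs" unfolding chain_def
  proof (intro conjI allI impI)
    show "?vs \<noteq> []" by simp
  next
    fix i assume "Suc i < length ?vs"
    then have "i = 0" by simp
    then show "E (?vs ! Suc i) (?vs ! i) \<noteq> {}" using chain_step[OF assms] by simp
  qed
  then have "FE E (last ?vs) (ws @ drop (Suc 0) ?vs)" using splice[of E ?vs 0 ws] w by simp
  then have "FE E (vs ! Suc k) (ws @ [vs ! Suc k])" by simp
  then have "height E (vs ! Suc k) \<le> enat (length (ws @ [vs ! Suc k]) - 1)" by (rule height_le)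
  then have le: "height E (vs ! Suc k) \<le> enat (length ws + 1 - 1)" by simp
  have "ws \<noteq> []" using FE_ne[OF w(1)] .
  then have "length ws + 1 - 1 = (length ws - 1) + 1" by simp
  then have "enat (length ws + 1 - 1) = enat (length ws - 1) + 1" by (simp add: one_enat_def)
  then show ?thesis using le w(2) by simp
qed

lemma mono_step:
  assumes "monotonous E" "chain E vs" "Suc k < length vs"
  shows "height E (vs ! k) \<le> height E (vs ! Suc k)"
  using chain_step[OF assms(2,3)] assms(1) unfolding monotonous_def by blast

lemma mono_chain:
  assumes "monotonous E" "chain E vs" "i \<le> j" "j < length vs"
  shows "height E (vs ! i) \<le> height E (vs ! j)"
  using assms(3,4)
proof (induction j rule: dec_induct)
  case base then show ?case by simp
next
  case (step n)
  then show ?case using mono_step[OF assms(1,2), of n] by (meson Suc_lessD order_trans)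
qed

lemma ancestor_height:
  assumes "monotonous E" "ancestor E A B" shows "height E A \<le> height E B"
proof -
  obtain vs where v: "chain E vs" "hd vs = A" "last vs = B" using assms ancestor_chain by metis
  have ne: "vs \<noteq> []" using v chain_ne by blast
  then show ?thesis using mono_chain[OF assms(1) v(1), of 0 "length vs - 1"] v
    by (simp add: hd_conv_nth last_conv_nth)
qed

lemma iso_height: "monotonous E \<Longrightarrow> isotypic E A B \<Longrightarrow> height E A = height E B"
proof -
  assume m: "monotonous E" and i: "isotypic E A B"
  have "height E A \<le> height E B" using ancestor_height[OF m] i unfolding isotypic_def by blast
  moreover have "height E B \<le> height E A" using ancestor_height[OF m] i unfolding isotypic_def by blast
  ultimately show ?thesis by (rule order_antisym)
qed

lemma minimal_heights:
  assumes "FE E X vs" "height E X = enat (length vs - 1)" "k < length vs"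
  shows "height E (vs ! k) = enat k"
proof (rule ccontr)
  assume ne: "height E (vs ! k) \<noteq> enat k"
  have le: "height E (vs ! k) \<le> enat k" using height_prefix[OF assms(1,3)] .
  then have lt: "height E (vs ! k) < enat k" using ne by (simp add: order_less_le)
  then obtain m where "height E (vs ! k) = enat m" using enat_iless by blast
  then have fin: "height E (vs ! k) < \<infinity>" by simp
  obtain ws where w: "FE E (vs ! k) ws" "height E (vs ! k) = enat (length ws - 1)"
    using height_fin[OF fin] by blast
  have wl: "length ws - 1 < k" using lt w by simp
  have vne: "vs \<noteq> []" using FE_ne[OF assms(1)] .
  show False
  proof (cases "Suc k < length vs")
    case False
    then have "k = length vs - 1" using assms by simp
    then have "vs ! k = X" using assms(1) vne unfolding FE_def by (simp add: last_conv_nth)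
    then show False using ne assms \<open>k = length vs - 1\<close> by simp
  next
    case True
    have vc: "chain E vs" and lx: "last vs = X" using assms(1) unfolding FE_def by auto
    have "FE E (last vs) (ws @ drop (Suc k) vs)" using splice[OF w(1) vc True] .
    then have "FE E X (ws @ drop (Suc k) vs)" using lx by simp
    then have "height E X \<le> enat (length (ws @ drop (Suc k) vs) - 1)" by (rule height_le)
    moreover have "length (ws @ drop (Suc k) vs) - 1 < length vs - 1" using wl True by simp
    ultimately show False using assms(2) by simp
  qed
qed

lemma ivt:
  fixes f :: "nat \<Rightarrow> enat"
  assumes "f 0 = 0" "\<forall>k<p. f (Suc k) \<le> f k + 1" "enat (Suc j) \<le> f p"
  shows "\<exists>k<p. f k = enat j \<and> f (Suc k) = enat (Suc j)"
  using assms(2,3)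
proof (induction p)
  case 0 then show ?case using assms(1) by (simp add: zero_enat_def)
next
  case (Suc p)
  show ?case
  proof (cases "enat (Suc j) \<le> f p")
    case True
    have "\<forall>k<p. f (Suc k) \<le> f k + 1" using Suc.prems(1) by simp
    then obtain k where "k < p" "f k = enat j \<and> f (Suc k) = enat (Suc j)"
      using Suc.IH True by blast
    then show ?thesis by (intro exI[of _ k]) simp
  next
    case False
    then have "f p < enat (Suc j)" by simp
    then obtain a where fa: "f p = enat a" using enat_iless by blast
    have aj: "a \<le> j" using False fa by simp
    have "f (Suc p) \<le> f p + 1" using Suc.prems(1) by simp
    then have "f (Suc p) \<le> enat a + 1" using fa by simp
    then have b: "f (Suc p) \<le> enat (Suc a)" by (simp add: one_enat_def)
    then obtain c where fc: "f (Suc p) = enat c" using enat_ile by blast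
    have "Suc j \<le> c" using Suc.prems(2) fc by simp
    moreover have "c \<le> Suc a" using b fc by simp
    ultimately have "a = j" "c = Suc j" using aj by auto
    then show ?thesis using fa fc by blast
  qed
qed

lemma FE_last: "FE E X vs \<Longrightarrow> vs ! (length vs - 1) = X"
proof -
  assume a: "FE E X vs"
  have "vs \<noteq> []" using FE_ne[OF a] .
  then show ?thesis using a unfolding FE_def by (simp add: last_conv_nth)
qed

lemma FE_hd_height: "FE E X vs \<Longrightarrow> height E (vs ! 0) = 0"
proof -
  assume a: "FE E X vs"
  have "vs \<noteq> []" using FE_ne[OF a] .
  then have "hd vs = vs ! 0" by (simp add: hd_conv_nth)
  moreover have "primitive E (hd vs)" using a unfolding FE_def by simp
  ultimately show ?thesis using height_primitive by metis
qed

lemma crit_iso: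
  assumes mono: "monotonous E"
    and univ: "\<forall>ws. FE E X ws \<longrightarrow> embeds E as ws"
    and asF: "FE E X as" and asmin: "height E X = enat (length as - 1)"
    and bsF: "FE E X bs" and cr: "critical E bs r" and hr: "height E (bs ! r) = enat j"
  shows "isotypic E (as ! j) (bs ! r)"
proof -
  have bc: "chain E bs" and bl: "last bs = X" using bsF unfolding FE_def by simp_all
  have c: "r < length bs - 1" "height E (bs ! (r+1)) = height E (bs ! r) + 1"
    using cr unfolding critical_def evo_len_def by simp_all
  have r: "Suc r < length bs" using c(1) by linarith
  have hs: "height E (bs ! Suc r) = enat (Suc j)" using c(2) hr by (simp add: one_enat_def)
  have fin: "height E (bs ! r) < \<infinity>" using hr by simp
  obtain ds where d: "FE E (bs ! r) ds" "height E (bs ! r) = enat (length ds - 1)"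
    using height_fin[OF fin] by blast
  have dl: "length ds - 1 = j" using d hr by simp
  have dne: "ds \<noteq> []" using FE_ne[OF d(1)] .
  let ?g = "ds @ drop (Suc r) bs"
  have gF: "FE E X ?g" using splice[OF d(1) bc r] bl by simp
  have "embeds E as ?g" using univ gF by blast
  then obtain \<rho> where rho: "\<forall>k \<le> evo_len as. \<rho> k \<le> evo_len ?g \<and> isotypic E (as ! k) (?g ! (\<rho> k))"
    unfolding embeds_def by blast
  have "height E (bs ! Suc r) \<le> height E X"
    using mono_chain[OF mono bc, of "Suc r" "length bs - 1"] r FE_last[OF bsF] by simp
  then have "enat (Suc j) \<le> enat (length as - 1)" using hs asmin by simp
  then have jl: "j \<le> evo_len as" and jl2: "j < length as" unfolding evo_len_def by auto
  have iso: "isotypic E (as ! j) (?g ! (\<rho> j))" and rl: "\<rho> j \<le> evo_len ?g" using rho jl by auto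
  have ha: "height E (as ! j) = enat j" using minimal_heights[OF asF asmin jl2] .
  have hg: "height E (?g ! (\<rho> j)) = enat j" using iso_height[OF mono iso] ha by simp
  show ?thesis
  proof (cases "\<rho> j < length ds")
    case True
    then have "?g ! (\<rho> j) = ds ! (\<rho> j)" by (simp add: nth_append)
    moreover have "height E (ds ! (\<rho> j)) = enat (\<rho> j)" using minimal_heights[OF d(1) d(2) True] .
    ultimately have "\<rho> j = j" using hg by simp
    have ld: "last ds = bs ! r" using d(1) unfolding FE_def by simp
    have "ds ! (length ds - 1) = last ds" using dne by (simp add: last_conv_nth)
    then have "ds ! (\<rho> j) = bs ! r" using \<open>\<rho> j = j\<close> dl ld by simp
    then have "?g ! (\<rho> j) = bs ! r" using True by (simp add: nth_append)
    then show ?thesis using iso by simp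
  next
    case False
    have glen: "length ?g = length ds + (length bs - Suc r)" by simp
    have ix: "Suc r + (\<rho> j - length ds) < length bs"
      using rl False r glen dne unfolding evo_len_def by linarith
    have "?g ! (\<rho> j) = bs ! (Suc r + (\<rho> j - length ds))"
      using False r by (simp add: nth_append)
    moreover have "height E (bs ! Suc r) \<le> height E (bs ! (Suc r + (\<rho> j - length ds)))"
      using mono_chain[OF mono bc _ ix] by simp
    ultimately show ?thesis using hg hs by simp
  qed
qed

theorem theorem6p1:
  fixes E :: "'v \<Rightarrow> 'v \<Rightarrow> 'e set" and X :: 'v
  assumes "monotonous E"
  shows "phylogenetic E X \<longleftrightarrow> normal E X \<and> height E X < \<infinity>"
proof
  assume "phylogenetic E X"
  then obtain as es where u: "universal_evolution E X as es" unfolding phylogenetic_def by blast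
  have fe: "full_evolution E X as es" and un: "\<forall>ws fs. full_evolution E X ws fs \<longrightarrow> embeds E as ws"
    using u unfolding universal_evolution_def by simp_all
  have asF: "FE E X as" using FE_iff[of E X as] fe by blast
  have univ: "\<forall>ws. FE E X ws \<longrightarrow> embeds E as ws"
  proof (intro allI impI)
    fix ws assume "FE E X ws"
    then obtain fs where "full_evolution E X ws fs" using FE_iff[of E X ws] by blast
    then show "embeds E as ws" using un by blast
  qed
  have hle: "height E X \<le> enat (length as - 1)" using height_le[OF asF] .
  have "enat (length as - 1) < \<infinity>" by simp
  then have fin: "height E X < \<infinity>" using le_less_trans[OF hle] by blast
  obtain mu where mu: "FE E X mu" "height E X = enat (length mu - 1)" using height_fin[OF fin] by blast
  have "embeds E as mu" using univ mu(1) by blast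
  then have "evo_len as \<le> evo_len mu" unfolding embeds_def by blast
  then have "enat (length as - 1) \<le> height E X" using mu(2) unfolding evo_len_def by simp
  then have asmin: "height E X = enat (length as - 1)" using hle by (rule order_antisym[rotated])
  have "normal E X" unfolding normal_def
  proof (intro ballI impI)
    fix C D assume C: "C \<in> critical_ancestors E X" and D: "D \<in> critical_ancestors E X"
      and eq: "height E C = height E D"
    obtain bs es1 r where b: "C = bs ! r" "full_evolution E X bs es1" "critical E bs r"
      using C unfolding critical_ancestors_def by blast
    obtain cs es2 s where c: "D = cs ! s" "full_evolution E X cs es2" "critical E cs s"
      using D unfolding critical_ancestors_def by blast
    have "height E (bs ! r) < \<infinity>" using b(3) unfolding critical_def by simp
    then obtain j where j: "height E C = enat j" using b(1) by (cases "height E (bs ! r)") auto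
    have bF: "FE E X bs" using FE_iff[of E X bs] b(2) by blast
    have cF: "FE E X cs" using FE_iff[of E X cs] c(2) by blast
    have hb: "height E (bs ! r) = enat j" using j b(1) by simp
    have hc: "height E (cs ! s) = enat j" using j eq c(1) by simp
    have 1: "isotypic E (as ! j) C"
      using crit_iso[OF assms univ asF asmin bF b(3) hb] b(1) by simp
    have 2: "isotypic E (as ! j) D"
      using crit_iso[OF assms univ asF asmin cF c(3) hc] c(1) by simp
    show "isotypic E C D" using iso_trans2[OF iso_sym[OF 1] 2] .
  qed
  then show "normal E X \<and> height E X < \<infinity>" using fin by blast
next
  assume a: "normal E X \<and> height E X < \<infinity>"
  then obtain as where asF: "FE E X as" and asmin: "height E X = enat (length as - 1)"
    using height_fin[OF conjunct2[OF a]] by blast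
  define n where "n = length as - 1"
  obtain es where ase: "full_evolution E X as es" using asF FE_iff[of E X as] by blast
  have ha: "\<And>k. k < length as \<Longrightarrow> height E (as ! k) = enat k"
    using minimal_heights[OF asF asmin] .
  have "universal_evolution E X as es" unfolding universal_evolution_def
  proof (intro conjI allI impI)
    show "full_evolution E X as es" using ase .
  next
    fix bs fs assume "full_evolution E X bs fs"
    then have bsF: "FE E X bs" using FE_iff[of E X bs] by blast
    have bc: "chain E bs" using bsF unfolding FE_def by simp
    have bne: "bs \<noteq> []" using chain_ne[OF bc] .
    define p where "p = length bs - 1"
    have np: "n \<le> p" using height_le[OF bsF] asmin unfolding n_def p_def by simp
    have hp: "height E (bs ! p) = enat n" using FE_last[OF bsF] asmin unfolding p_def n_def by simp
    have ex: "\<exists>i<p. height E (bs ! i) = enat k \<and> height E (bs ! Suc i) = enat (Suc k)"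
      if "k < n" for k
    proof (rule ivt[where f="\<lambda>i. height E (bs ! i)"])
      show "height E (bs ! 0) = 0" using FE_hd_height[OF bsF] .
      show "\<forall>i<p. height E (bs ! Suc i) \<le> height E (bs ! i) + 1"
        using height_step[OF bc] bne unfolding p_def by auto
      show "enat (Suc k) \<le> height E (bs ! p)" using hp that by simp
    qed
    define \<rho> where "\<rho> k = (if k < n then (SOME i. i < p \<and> height E (bs ! i) = enat k \<and>
        height E (bs ! Suc i) = enat (Suc k)) else p)" for k
    have rho: "\<rho> k < p \<and> height E (bs ! \<rho> k) = enat k \<and> height E (bs ! Suc (\<rho> k)) = enat (Suc k)"
      if "k < n" for k
      using someI_ex[OF ex[OF that]] that unfolding \<rho>_def by simp
    have rn: "\<rho> n = p" unfolding \<rho>_def by simp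
    show "embeds E as bs" unfolding embeds_def
    proof (intro conjI)
      show "evo_len as \<le> evo_len bs" using np unfolding evo_len_def n_def p_def .
    next
      show "\<exists>r :: nat \<Rightarrow> nat. (\<forall>i j. i < j \<and> j \<le> evo_len as \<longrightarrow> r i < r j) \<and>
        (\<forall>k \<le> evo_len as. r k \<le> evo_len bs \<and> isotypic E (as ! k) (bs ! (r k)))"
    proof (rule exI[of _ \<rho>], rule conjI; intro allI impI)
      fix i j assume ij: "i < j \<and> j \<le> evo_len as"
      show "\<rho> i < \<rho> j"
      proof (cases "j = n")
        case True then show ?thesis using rho[of i] rn ij by simp
      next
        case False
        then have jn: "j < n" using ij unfolding evo_len_def n_def by simp
        show ?thesis
        proof (rule ccontr)
          assume "\<not> \<rho> i < \<rho> j"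
          then have le: "\<rho> j \<le> \<rho> i" by simp
          have "\<rho> i < p" using rho[of i] ij jn by simp
          then have "\<rho> i < length bs" unfolding p_def by linarith
          then have "height E (bs ! \<rho> j) \<le> height E (bs ! \<rho> i)"
            using mono_chain[OF assms bc le] by simp
          then show False using rho[of i] rho[of j] ij jn by simp
        qed
      qed
    next
      fix k assume k: "k \<le> evo_len as"
      then have kn: "k \<le> n" unfolding evo_len_def n_def .
      show "\<rho> k \<le> evo_len bs \<and> isotypic E (as ! k) (bs ! \<rho> k)"
      proof (cases "k = n")
        case True
        have "as ! k = X" using FE_last[OF asF] True n_def by simp
        moreover have "bs ! \<rho> k = X" using FE_last[OF bsF] True rn p_def by simp
        ultimately show ?thesis using True rn iso_refl unfolding evo_len_def p_def by simp
      next
        case False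
        then have kn: "k < n" using kn by simp
        have crA: "critical E as k"
          unfolding critical_def evo_len_def using ha[of k] ha[of "Suc k"] kn n_def
          by (simp add: eSuc_enat[symmetric] eSuc_plus_1)
        have crB: "critical E bs (\<rho> k)"
          unfolding critical_def evo_len_def using rho[OF kn] p_def
          by (simp add: eSuc_enat[symmetric] eSuc_plus_1)
        have "as ! k \<in> critical_ancestors E X" using crA ase unfolding critical_ancestors_def by blast
        moreover have "bs ! \<rho> k \<in> critical_ancestors E X"
          using crB \<open>full_evolution E X bs fs\<close> unfolding critical_ancestors_def by blast
        moreover have "height E (as ! k) = height E (bs ! \<rho> k)" using ha[of k] rho[OF kn] kn n_def by simp
        ultimately have "isotypic E (as ! k) (bs ! \<rho> k)" using a unfolding normal_def by blast
        then show ?thesis using rho[OF kn] unfolding evo_len_def p_def by simp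
      qed
    qed
    qed
  qed
  then show "phylogenetic E X" unfolding phylogenetic_def by blast
qed

end
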